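(* Let $\kappa$ be a cumulant function with effective domain $\Theta$ satisfying Assumption (A1), let $\varphi>0$, $j\le k$ be integers, and let $Y_j,\dots,Y_k$ be independent with $Y_i\sim\mathrm{EDF}(\theta_i,v_i,\varphi,\kappa)$, $v_i>0$, $\theta_i\in\mathring\Theta$, and $\theta_j\le\dots\le\theta_k$. Put $v_{j:k}=\sum_{i=j}^k v_i$ and $Z_{j:k}=\frac{1}{v_{j:k}}\sum_{i=j}^k v_iY_i$. Then $Z^-_{j:k}\le_{st}Z_{j:k}\le_{st}Z^+_{j:k}$ for $Z^-_{j:k}\sim\mathrm{EDF}(\theta_j,v_{j:k},\varphi,\kappa)$ and $Z^+_{j:k}\sim\mathrm{EDF}(\theta_k,v_{j:k},\varphi,\kappa)$.
   Context: A real random variable $Y$ follows $\mathrm{EDF}(\theta,v,\varphi,\kappa)$ if it has density $f(y)=\exp\{(y\theta-\kappa(\theta))/(\varphi/v)+a(y;v/\varphi)\}$ with respect to a $\sigma$-finite measure $\nu$ on $\mathbb R$ not depending on $\theta$; $\theta\in\Theta$ is the canonical parameter, $\Theta$ the effective domain, $\kappa$ the cumulant function, $v>0$ the volume, $\varphi>0$ the dispersion parameter, $a$ a normalizing function. Assumption (A1): $\Theta$ has non-empty interior $\mathring{\Theta}$ and the dominating measures are not a single point mass. $X\le_{st}Y$ means $\mathbb P(X\le x)\ge\mathbb P(Y\le x)$ for all $x\in\mathbb R$. *)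

theory Defs
  imports "HOL-Probability.Probability"
begin

text \<open>The dominating measure and the normalizing
function may depend on the weight w = v/phi (but not on theta):
nu w is the sigma-finite dominating measure on the reals and a y w is a(y; w).\<close>

definition EDF :: "(real \<Rightarrow> real measure) \<Rightarrow> (real \<Rightarrow> real \<Rightarrow> real) \<Rightarrow> (real \<Rightarrow> real)
    \<Rightarrow> real \<Rightarrow> real \<Rightarrow> real \<Rightarrow> real measure" where
  "EDF \<nu> a \<kappa> \<theta> v \<phi> =
     density (\<nu> (v / \<phi>)) (\<lambda>y. ennreal (exp ((y * \<theta> - \<kappa> \<theta>) / (\<phi> / v) + a y (v / \<phi>))))"

definition cumulant_fun :: "(real \<Rightarrow> real measure) \<Rightarrow> (real \<Rightarrow> real \<Rightarrow> real) \<Rightarrow> (real \<Rightarrow> real)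
    \<Rightarrow> real set \<Rightarrow> bool" where
  "cumulant_fun \<nu> a \<kappa> \<Theta> \<longleftrightarrow>
     (\<forall>w>0. sets (\<nu> w) = sets borel \<and> sigma_finite_measure (\<nu> w)
        \<and> (\<lambda>y. a y w) \<in> borel_measurable borel
        \<and> (\<forall>\<theta>. \<theta> \<in> \<Theta> \<longleftrightarrow> (\<integral>\<^sup>+ y. ennreal (exp (y * \<theta> * w + a y w)) \<partial>\<nu> w) < \<infinity>)
        \<and> (\<forall>\<theta>\<in>\<Theta>. (\<integral>\<^sup>+ y. ennreal (exp ((y * \<theta> - \<kappa> \<theta>) * w + a y w)) \<partial>\<nu> w) = 1))"

definition A1 :: "(real \<Rightarrow> real measure) \<Rightarrow> real set \<Rightarrow> bool" where
  "A1 \<nu> \<Theta> \<longleftrightarrow> interior \<Theta> \<noteq> {} \<and> (\<forall>w>0. \<not> (\<exists>c. AE y in \<nu> w. y = c))"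

definition st_le :: "real measure \<Rightarrow> real measure \<Rightarrow> bool" where
  "st_le P Q \<longleftrightarrow> (\<forall>x. measure P {..x} \<ge> measure Q {..x})"

end

theory Submission
  imports Defs "HOL-Complex_Analysis.Cauchy_Integral_Formula"
begin
lemma pow_fact_le_exp:
  fixes y :: real assumes "0 \<le> y" shows "y ^ n / fact n \<le> exp y"
proof -
  have s: "(\<lambda>n. y ^ n / fact n) sums exp y"
    using exp_converges[of y] by (simp add: divide_inverse_commute)
  have "(\<Sum>i\<in>{n}. y ^ i / fact i) \<le> (\<Sum>i. y ^ i / fact i)"
    by (rule sum_le_suminf) (use s assms in \<open>auto simp: sums_iff\<close>)
  then show ?thesis using s by (simp add: sums_iff)
qed

lemma int_pow_exp:
  fixes \<rho> :: "real measure"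
  assumes sets: "sets \<rho> = sets borel"
    and L: "\<And>s. \<bar>s\<bar> < \<delta> \<Longrightarrow> integrable \<rho> (\<lambda>x. exp (s * x))"
    and c: "0 \<le> c" "c < \<delta>"
  shows "integrable \<rho> (\<lambda>x. \<bar>x\<bar> ^ n * exp (c * \<bar>x\<bar>))"
proof -
  define d where "d = (c + \<delta>) / 2"
  define e where "e = d - c"
  have e: "e > 0" and d: "\<bar>d\<bar> < \<delta>" "\<bar>-d\<bar> < \<delta>" and d0: "d \<ge> 0" using c by (auto simp: d_def e_def)
  have int: "integrable \<rho> (\<lambda>x. fact n / e ^ n * (exp (d * x) + exp ((-d) * x)))"
    using L[OF d(1)] L[OF d(2)] by auto
  show ?thesis
  proof (rule Bochner_Integration.integrable_bound[OF int])
    show "(\<lambda>x. \<bar>x\<bar> ^ n * exp (c * \<bar>x\<bar>)) \<in> borel_measurable \<rho>"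
      using sets by (simp add: measurable_cong_sets[OF sets refl])
    show "AE x in \<rho>. norm (\<bar>x\<bar> ^ n * exp (c * \<bar>x\<bar>))
        \<le> norm (fact n / e ^ n * (exp (d * x) + exp ((-d) * x)))"
    proof (intro AE_I2)
      fix x :: real
      have "(e * \<bar>x\<bar>) ^ n / fact n \<le> exp (e * \<bar>x\<bar>)"
        using e by (intro pow_fact_le_exp) auto
      then have 1: "\<bar>x\<bar> ^ n \<le> fact n / e ^ n * exp (e * \<bar>x\<bar>)"
        using e by (simp add: field_simps power_mult_distrib)
      have "\<bar>x\<bar> ^ n * exp (c * \<bar>x\<bar>) \<le> fact n / e ^ n * exp (e * \<bar>x\<bar>) * exp (c * \<bar>x\<bar>)"
        using 1 by (intro mult_right_mono) auto
      also have "\<dots> = fact n / e ^ n * exp (e * \<bar>x\<bar> + c * \<bar>x\<bar>)"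
        by (simp add: exp_add)
      also have "\<dots> = fact n / e ^ n * exp (d * \<bar>x\<bar>)"
        by (simp add: e_def algebra_simps)
      also have "\<dots> \<le> fact n / e ^ n * (exp (d * x) + exp ((-d) * x))"
        using e by (intro mult_left_mono) (auto simp: abs_if)
      finally show "norm (\<bar>x\<bar> ^ n * exp (c * \<bar>x\<bar>))
        \<le> norm (fact n / e ^ n * (exp (d * x) + exp ((-d) * x)))"
        using e by simp
    qed
  qed
qed

lemma partial_exp_le:
  fixes a :: real assumes "0 \<le> a" shows "(\<Sum>m<N. a ^ m / fact m) \<le> exp a"
proof -
  have s: "(\<lambda>n. a ^ n / fact n) sums exp a"
    using exp_converges[of a] by (simp add: divide_inverse_commute)
  have "(\<Sum>m<N. a ^ m / fact m) \<le> (\<Sum>i. a ^ i / fact i)"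
    by (rule sum_le_suminf) (use s assms in \<open>auto simp: sums_iff\<close>)
  then show ?thesis using s by (simp add: sums_iff)
qed

definition cm :: "real measure \<Rightarrow> nat \<Rightarrow> complex \<Rightarrow> complex" where
  "cm \<rho> n z = (CLINT x|\<rho>. complex_of_real x ^ n * exp (z * complex_of_real x))"

lemma int_term:
  fixes \<rho> :: "real measure"
  assumes sets: "sets \<rho> = sets borel"
    and L: "\<And>s. \<bar>s\<bar> < \<delta> \<Longrightarrow> integrable \<rho> (\<lambda>x. exp (s * x))"
    and d0: "0 < \<delta>"
  shows "integrable \<rho> (\<lambda>x. complex_of_real x ^ k * exp (\<i> * complex_of_real u * complex_of_real x))"
proof -
  have i0: "integrable \<rho> (\<lambda>x. \<bar>x\<bar> ^ k * exp (0 * \<bar>x\<bar>))"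
    by (rule int_pow_exp[OF sets L]) (use d0 in auto)
  show ?thesis
proof (rule Bochner_Integration.integrable_bound[OF i0])
  show "(\<lambda>x. complex_of_real x ^ k * exp (\<i> * complex_of_real u * complex_of_real x)) \<in> borel_measurable \<rho>"
    by (simp add: measurable_cong_sets[OF sets refl])
  show "AE x in \<rho>. norm (complex_of_real x ^ k * exp (\<i> * complex_of_real u * complex_of_real x))
          \<le> norm (\<bar>x\<bar> ^ k * exp (0 * \<bar>x\<bar>))"
    by (intro AE_I2) (simp add: norm_power norm_mult)
qed
qed

lemma taylor_cm:
  fixes \<rho> :: "real measure" and h :: complex
  assumes sets: "sets \<rho> = sets borel"
    and L: "\<And>s. \<bar>s\<bar> < \<delta> \<Longrightarrow> integrable \<rho> (\<lambda>x. exp (s * x))"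
    and h: "norm h < \<delta>"
  shows "(\<lambda>m. h ^ m / fact m * cm \<rho> (n + m) (\<i> * of_real u)) sums cm \<rho> n (\<i> * of_real u + h)"
proof -
  have d0: "0 < \<delta>" using h norm_ge_zero[of h] by linarith
  define g where "g x = complex_of_real x ^ n * exp (\<i> * of_real u * of_real x)" for x
  define s where "s N x = (\<Sum>m<N. h ^ m / fact m * (complex_of_real x ^ (n + m) * exp (\<i> * of_real u * of_real x)))" for N x
  have s_eq: "s N x = g x * (\<Sum>m<N. (h * of_real x) ^ m / fact m)" for N x
    by (simp add: s_def g_def sum_distrib_left power_add power_mult_distrib algebra_simps)
  have intt: "integrable \<rho> (\<lambda>x. complex_of_real x ^ k * exp (\<i> * of_real u * of_real x))" for k
    by (rule int_term[OF sets L d0])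
  have int_s: "integral\<^sup>L \<rho> (s N) = (\<Sum>m<N. h ^ m / fact m * cm \<rho> (n + m) (\<i> * of_real u))" for N
    unfolding s_def cm_def using intt by (simp add: integral_sum)
  have lim: "(\<lambda>N. integral\<^sup>L \<rho> (s N)) \<longlonglongrightarrow> integral\<^sup>L \<rho> (\<lambda>x. g x * exp (h * of_real x))"
  proof (rule integral_dominated_convergence[where w="\<lambda>x. \<bar>x\<bar> ^ n * exp (norm h * \<bar>x\<bar>)"])
    show "(\<lambda>x. g x * exp (h * complex_of_real x)) \<in> borel_measurable \<rho>"
      by (simp add: g_def measurable_cong_sets[OF sets refl])
    show "s N \<in> borel_measurable \<rho>" for N
      unfolding s_def measurable_cong_sets[OF sets refl] by (intro borel_measurable_sum) simp
    show "integrable \<rho> (\<lambda>x. \<bar>x\<bar> ^ n * exp (norm h * \<bar>x\<bar>))"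
      by (rule int_pow_exp[OF sets L]) (use h in auto)
    show "AE x in \<rho>. (\<lambda>N. s N x) \<longlonglongrightarrow> g x * exp (h * complex_of_real x)"
    proof (intro AE_I2)
      fix x
      have "(\<lambda>m. (h * of_real x) ^ m / fact m) sums exp (h * of_real x)"
        using exp_converges[of "h * of_real x"] by (simp add: scaleR_conv_of_real divide_inverse ac_simps)
      then have "(\<lambda>N. \<Sum>m<N. (h * of_real x) ^ m / fact m) \<longlonglongrightarrow> exp (h * of_real x)"
        by (simp add: sums_def)
      then show "(\<lambda>N. s N x) \<longlonglongrightarrow> g x * exp (h * complex_of_real x)"
        unfolding s_eq by (intro tendsto_mult_left)
    qed
    show "AE x in \<rho>. norm (s N x) \<le> \<bar>x\<bar> ^ n * exp (norm h * \<bar>x\<bar>)" for N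
    proof (intro AE_I2)
      fix x
      have "norm (\<Sum>m<N. (h * of_real x) ^ m / fact m) \<le> (\<Sum>m<N. norm ((h * of_real x) ^ m / fact m))"
        by (rule norm_sum)
      also have "\<dots> = (\<Sum>m<N. (norm h * \<bar>x\<bar>) ^ m / fact m)"
        by (simp add: norm_divide norm_power norm_mult)
      also have "\<dots> \<le> exp (norm h * \<bar>x\<bar>)"
        by (rule partial_exp_le) auto
      finally have 1: "norm (\<Sum>m<N. (h * of_real x) ^ m / fact m) \<le> exp (norm h * \<bar>x\<bar>)" .
      have "norm (s N x) = \<bar>x\<bar> ^ n * norm (\<Sum>m<N. (h * of_real x) ^ m / fact m)"
        by (simp add: s_eq g_def norm_mult norm_power)
      also have "\<dots> \<le> \<bar>x\<bar> ^ n * exp (norm h * \<bar>x\<bar>)"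
        using 1 by (intro mult_left_mono) auto
      finally show "norm (s N x) \<le> \<bar>x\<bar> ^ n * exp (norm h * \<bar>x\<bar>)" .
    qed
  qed
  have "integral\<^sup>L \<rho> (\<lambda>x. g x * exp (h * of_real x)) = cm \<rho> n (\<i> * of_real u + h)"
    unfolding cm_def g_def by (simp add: distrib_right exp_add mult.assoc)
  with lim show ?thesis
    unfolding sums_def int_s by simp
qed

lemma cm_real:
  "cm \<rho> 0 (complex_of_real t) = complex_of_real (\<integral>x. exp (t * x) \<partial>\<rho>)"
proof -
  have "complex_of_real x ^ 0 * exp (complex_of_real t * complex_of_real x) = complex_of_real (exp (t * x))" for x
    by (metis exp_of_real mult_1 of_real_mult power_0)
  then show ?thesis unfolding cm_def by (simp only: integral_complex_of_real)
qed

lemma laplace_unique: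
  fixes \<rho>1 \<rho>2 :: "real measure"
  assumes r1: "real_distribution \<rho>1" and r2: "real_distribution \<rho>2" and d0: "0 < \<delta>"
    and L1: "\<And>s. \<bar>s\<bar> < \<delta> \<Longrightarrow> integrable \<rho>1 (\<lambda>x. exp (s * x))"
    and L2: "\<And>s. \<bar>s\<bar> < \<delta> \<Longrightarrow> integrable \<rho>2 (\<lambda>x. exp (s * x))"
    and E: "\<And>s. \<bar>s\<bar> < \<delta> \<Longrightarrow> (\<integral>x. exp (s * x) \<partial>\<rho>1) = (\<integral>x. exp (s * x) \<partial>\<rho>2)"
  shows "\<rho>1 = \<rho>2"
proof -
  have sets1: "sets \<rho>1 = sets borel" and sets2: "sets \<rho>2 = sets borel"
    using r1 r2 by (auto simp: real_distribution_def real_distribution_axioms_def)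
  define D where "D n z = cm \<rho>1 n z - cm \<rho>2 n z" for n z
  have TD: "(\<lambda>m. h ^ m / fact m * D (n + m) (\<i> * of_real u)) sums D n (\<i> * of_real u + h)"
    if "norm h < \<delta>" for h n u
    using sums_diff[OF taylor_cm[OF sets1 L1 that, of n u] taylor_cm[OF sets2 L2 that, of n u]]
    by (simp add: D_def right_diff_distrib)
  have Dreal: "D 0 (complex_of_real t) = 0" if "\<bar>t\<bar> < \<delta>" for t
    using E[OF that] by (simp add: D_def cm_real)
  have A: "D m 0 = 0" for m
  proof (rule ccontr)
    assume nz: "D m 0 \<noteq> 0"
    have m0: "m > 0"
    proof (rule ccontr)
      assume "\<not> m > 0"
      then have "m = 0" by simp
      with nz Dreal[of 0] d0 show False by simp
    qed
    have sm: "(\<lambda>n. D n 0 / fact n * (x - 0) ^ n) sums (D 0 x)" if "norm (x - 0) < \<delta>" for x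
      using TD[of x 0 0] that by (simp add: ac_simps)
    have D00: "D 0 0 = 0" using Dreal[of 0] d0 by simp
    have nz': "D m 0 / fact m \<noteq> 0" using nz by simp
    obtain s where s: "0 < s" and nzs: "\<And>z. z \<in> cball 0 s - {0} \<Longrightarrow> D 0 z \<noteq> 0"
      using powser_0_nonzero[of \<delta> 0 "\<lambda>n. D n 0 / fact n" "D 0" m, OF d0 sm D00 nz' m0] by blast
    define t where "t = min s (\<delta>/2)"
    have t: "0 < t" "t \<le> s" "\<bar>t\<bar> < \<delta>" using s d0 by (auto simp: t_def)
    have "D 0 (complex_of_real t) \<noteq> 0"
      using t by (intro nzs) auto
    with Dreal[OF t(3)] show False by simp
  qed
  have B: "\<forall>n u. \<bar>u\<bar> \<le> real K * (\<delta>/2) \<longrightarrow> D n (\<i> * of_real u) = 0" for K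
  proof (induction K)
    case 0
    then show ?case using A by simp
  next
    case (Suc K)
    show ?case
    proof (intro allI impI)
      fix n u assume u: "\<bar>u\<bar> \<le> real (Suc K) * (\<delta>/2)"
      define u0 where "u0 = u * real K / real (Suc K)"
      have u0: "\<bar>u0\<bar> \<le> real K * (\<delta>/2)"
      proof -
        have "\<bar>u0\<bar> = \<bar>u\<bar> * real K / real (Suc K)" by (simp add: u0_def abs_mult)
        also have "\<dots> \<le> real (Suc K) * (\<delta>/2) * real K / real (Suc K)"
          using u by (intro divide_right_mono mult_right_mono) auto
        also have "\<dots> = real K * (\<delta>/2)"
          by (simp only: of_nat_Suc) (simp add: field_simps)
        finally show ?thesis .
      qed
      have "u - u0 = u / real (Suc K)"
        by (simp only: u0_def of_nat_Suc) (simp add: field_simps)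
      then have "\<bar>u - u0\<bar> = \<bar>u\<bar> / real (Suc K)"
        by (simp add: abs_divide)
      also have "\<dots> \<le> \<delta>/2"
        using u by (simp only: of_nat_Suc) (simp add: field_simps)
      finally have du: "\<bar>u - u0\<bar> < \<delta>" using d0 by simp
      define h where "h = \<i> * complex_of_real (u - u0)"
      have nh: "norm h < \<delta>" using du by (simp add: h_def norm_mult del: of_real_diff)
      have "(\<lambda>m. h ^ m / fact m * D (n + m) (\<i> * of_real u0)) sums D n (\<i> * of_real u0 + h)"
        by (rule TD[OF nh])
      moreover have "D (n + m) (\<i> * of_real u0) = 0" for m
        using Suc.IH u0 by blast
      moreover have "\<i> * of_real u0 + h = \<i> * of_real u"
        by (simp add: h_def algebra_simps)
      ultimately have "(\<lambda>m. 0) sums D n (\<i> * of_real u)" by simp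
      then show "D n (\<i> * of_real u) = 0" by (simp add: sums_iff)
    qed
  qed
  have "char \<rho>1 = char \<rho>2"
  proof
    fix t :: real
    obtain K :: nat where K: "\<bar>t\<bar> / (\<delta>/2) \<le> real K" using real_arch_simple by blast
    have "\<bar>t\<bar> \<le> real K * (\<delta>/2)" using K d0 by (simp add: field_simps)
    then have "D 0 (\<i> * of_real t) = 0" using B by blast
    then show "char \<rho>1 t = char \<rho>2 t"
      by (simp add: D_def cm_def char_def mult.assoc)
  qed
  then show ?thesis by (rule Levy_uniqueness[OF r1 r2])
qed

lemma EDF_alt: "EDF \<nu> a \<kappa> \<theta> v \<phi> = density (\<nu> (v/\<phi>)) (\<lambda>y. ennreal (exp ((y*\<theta> - \<kappa> \<theta>) * (v/\<phi>) + a y (v/\<phi>))))"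
  by (simp add: EDF_def)

lemma cfD:
  assumes "cumulant_fun \<nu> a \<kappa> \<Theta>" "w > 0"
  shows "sets (\<nu> w) = sets borel" "sigma_finite_measure (\<nu> w)" "(\<lambda>y. a y w) \<in> borel_measurable borel"
    "\<And>\<theta>. \<theta> \<in> \<Theta> \<Longrightarrow> (\<integral>\<^sup>+ y. ennreal (exp ((y * \<theta> - \<kappa> \<theta>) * w + a y w)) \<partial>\<nu> w) = 1"
  using assms unfolding cumulant_fun_def by auto

lemma EDF_sets:
  assumes "cumulant_fun \<nu> a \<kappa> \<Theta>" "\<phi> > 0" "v > 0"
  shows "sets (EDF \<nu> a \<kappa> \<theta> v \<phi>) = sets borel"
  using cfD(1)[OF assms(1), of "v/\<phi>"] assms by (simp add: EDF_alt)

lemma EDF_space: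
  assumes "cumulant_fun \<nu> a \<kappa> \<Theta>" "\<phi> > 0" "v > 0"
  shows "space (EDF \<nu> a \<kappa> \<theta> v \<phi>) = UNIV"
  using sets_eq_imp_space_eq[OF EDF_sets[OF assms]] by simp

lemma EDF_laplace:
  assumes cf: "cumulant_fun \<nu> a \<kappa> \<Theta>" and p: "\<phi> > 0" "v > 0" and th: "\<theta> \<in> \<Theta>" "\<theta> + s / (v/\<phi>) \<in> \<Theta>"
  shows "(\<integral>\<^sup>+y. ennreal (exp (s * y)) \<partial>EDF \<nu> a \<kappa> \<theta> v \<phi>)
     = ennreal (exp ((v/\<phi>) * (\<kappa> (\<theta> + s / (v/\<phi>)) - \<kappa> \<theta>)))"
proof -
  define w where "w = v/\<phi>"
  have w: "w > 0" using p by (simp add: w_def)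
  note sets = cfD(1)[OF cf w] and am = cfD(3)[OF cf w]
  define \<theta>' where "\<theta>' = \<theta> + s / w"
  have th': "\<theta>' \<in> \<Theta>" using th by (simp add: \<theta>'_def w_def)
  have meas: "(\<lambda>y. ennreal (exp ((y*\<theta> - \<kappa> \<theta>) * w + a y w))) \<in> borel_measurable (\<nu> w)"
    using am by (simp add: measurable_cong_sets[OF sets refl])
  have "(\<integral>\<^sup>+y. ennreal (exp (s * y)) \<partial>EDF \<nu> a \<kappa> \<theta> v \<phi>)
      = (\<integral>\<^sup>+y. ennreal (exp ((y*\<theta> - \<kappa> \<theta>) * w + a y w)) * ennreal (exp (s * y)) \<partial>\<nu> w)"
    unfolding EDF_alt w_def[symmetric]
    by (rule nn_integral_density[OF meas]) (simp add: measurable_cong_sets[OF sets refl])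
  also have "\<dots> = (\<integral>\<^sup>+y. ennreal (exp (w * (\<kappa> \<theta>' - \<kappa> \<theta>))) * ennreal (exp ((y * \<theta>' - \<kappa> \<theta>') * w + a y w)) \<partial>\<nu> w)"
  proof (intro nn_integral_cong)
    fix y
    have "(y*\<theta> - \<kappa> \<theta>) * w + a y w + s * y = w * (\<kappa> \<theta>' - \<kappa> \<theta>) + ((y * \<theta>' - \<kappa> \<theta>') * w + a y w)"
      using w by (simp add: \<theta>'_def field_simps)
    then show "ennreal (exp ((y*\<theta> - \<kappa> \<theta>) * w + a y w)) * ennreal (exp (s * y))
      = ennreal (exp (w * (\<kappa> \<theta>' - \<kappa> \<theta>))) * ennreal (exp ((y * \<theta>' - \<kappa> \<theta>') * w + a y w))"
      by (simp add: ennreal_mult'[symmetric] exp_add[symmetric])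
  qed
  also have "\<dots> = ennreal (exp (w * (\<kappa> \<theta>' - \<kappa> \<theta>))) * (\<integral>\<^sup>+y. ennreal (exp ((y * \<theta>' - \<kappa> \<theta>') * w + a y w)) \<partial>\<nu> w)"
    by (rule nn_integral_cmult) (use am in \<open>simp add: measurable_cong_sets[OF sets refl]\<close>)
  also have "\<dots> = ennreal (exp (w * (\<kappa> \<theta>' - \<kappa> \<theta>)))"
    using cfD(4)[OF cf w th'] by simp
  finally show ?thesis by (simp add: w_def \<theta>'_def)
qed

lemma EDF_prob:
  assumes cf: "cumulant_fun \<nu> a \<kappa> \<Theta>" and p: "\<phi> > 0" "v > 0" and th: "\<theta> \<in> \<Theta>"
  shows "prob_space (EDF \<nu> a \<kappa> \<theta> v \<phi>)"
proof (rule prob_spaceI)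
  have "(\<integral>\<^sup>+y. ennreal (exp (0 * y)) \<partial>EDF \<nu> a \<kappa> \<theta> v \<phi>) = 1"
    using EDF_laplace[OF cf p th, of 0] th by simp
  then show "emeasure (EDF \<nu> a \<kappa> \<theta> v \<phi>) (space (EDF \<nu> a \<kappa> \<theta> v \<phi>)) = 1"
    by (simp add: nn_integral_const)
qed

lemma EDF_st_mono:
  assumes cf: "cumulant_fun \<nu> a \<kappa> \<Theta>" and p: "\<phi> > 0" "v > 0"
    and th: "\<theta> \<in> \<Theta>" "\<theta>' \<in> \<Theta>" and le: "\<theta> \<le> \<theta>'"
  shows "st_le (EDF \<nu> a \<kappa> \<theta> v \<phi>) (EDF \<nu> a \<kappa> \<theta>' v \<phi>)"
  unfolding st_le_def
proof
  fix x :: real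
  define w where "w = v/\<phi>"
  have w: "w > 0" using p by (simp add: w_def)
  note sets = cfD(1)[OF cf w] and am = cfD(3)[OF cf w]
  define P where "P = EDF \<nu> a \<kappa> \<theta> v \<phi>"
  define P' where "P' = EDF \<nu> a \<kappa> \<theta>' v \<phi>"
  interpret P: prob_space P unfolding P_def by (rule EDF_prob[OF cf p th(1)])
  interpret P': prob_space P' unfolding P'_def by (rule EDF_prob[OF cf p th(2)])
  have spP: "space P = UNIV" "space P' = UNIV" unfolding P_def P'_def using EDF_space[OF cf p] by auto
  define f where "f y = exp ((y*\<theta> - \<kappa> \<theta>) * w + a y w)" for y
  define g where "g y = exp (w * y * (\<theta>' - \<theta>) - w * (\<kappa> \<theta>' - \<kappa> \<theta>))" for y
  have fg: "exp ((y*\<theta>' - \<kappa> \<theta>') * w + a y w) = f y * g y" for y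
    unfolding f_def g_def by (simp add: exp_add[symmetric] algebra_simps)
  have Pd: "P = density (\<nu> w) (\<lambda>y. ennreal (f y))"
    unfolding P_def EDF_alt f_def w_def ..
  have P'd: "P' = density (\<nu> w) (\<lambda>y. ennreal (f y * g y))"
    unfolding P'_def EDF_alt fg[symmetric] w_def ..
  have fm: "(\<lambda>y. ennreal (f y)) \<in> borel_measurable (\<nu> w)"
    using am by (simp add: f_def measurable_cong_sets[OF sets refl])
  have gmono: "g y \<le> g y'" if "y \<le> y'" for y y'
  proof -
    have "w * y * (\<theta>' - \<theta>) \<le> w * y' * (\<theta>' - \<theta>)"
      using that w le by (intro mult_right_mono mult_left_mono) auto
    then show ?thesis unfolding g_def by simp
  qed
  define c where "c = g x"
  have c: "c > 0" by (simp add: c_def g_def)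
  have A: "{..x} \<in> sets (\<nu> w)" "{x<..} \<in> sets (\<nu> w)" using sets by auto
  have e1: "emeasure P' {..x} \<le> ennreal c * emeasure P {..x}"
  proof -
    have "emeasure P' {..x} = (\<integral>\<^sup>+y. ennreal (f y * g y) * indicator {..x} y \<partial>\<nu> w)"
      unfolding P'd by (rule emeasure_density[OF _ A(1)]) (use am in \<open>simp add: f_def g_def measurable_cong_sets[OF sets refl]\<close>)
    also have "\<dots> \<le> (\<integral>\<^sup>+y. ennreal c * (ennreal (f y) * indicator {..x} y) \<partial>\<nu> w)"
    proof (intro nn_integral_mono)
      fix y
      show "ennreal (f y * g y) * indicator {..x} y \<le> ennreal c * (ennreal (f y) * indicator {..x} y)"
      proof (cases "y \<le> x")
        case True
        then have "f y * g y \<le> c * f y" using gmono[OF True] by (simp add: c_def f_def mult.commute)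
        then show ?thesis using True c
          by (simp add: ennreal_mult'[symmetric] f_def)
      qed simp
    qed
    also have "\<dots> = ennreal c * (\<integral>\<^sup>+y. ennreal (f y) * indicator {..x} y \<partial>\<nu> w)"
      by (rule nn_integral_cmult) (use fm sets in \<open>simp add: measurable_cong_sets[OF sets refl]\<close>)
    also have "\<dots> = ennreal c * emeasure P {..x}"
      unfolding Pd by (subst emeasure_density[OF fm A(1)]) simp
    finally show ?thesis .
  qed
  have e2: "ennreal c * emeasure P {x<..} \<le> emeasure P' {x<..}"
  proof -
    have "ennreal c * emeasure P {x<..} = ennreal c * (\<integral>\<^sup>+y. ennreal (f y) * indicator {x<..} y \<partial>\<nu> w)"
      unfolding Pd by (subst emeasure_density[OF fm A(2)]) simp
    also have "\<dots> = (\<integral>\<^sup>+y. ennreal c * (ennreal (f y) * indicator {x<..} y) \<partial>\<nu> w)"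
      by (rule nn_integral_cmult[symmetric]) (use fm sets in \<open>simp add: measurable_cong_sets[OF sets refl]\<close>)
    also have "\<dots> \<le> (\<integral>\<^sup>+y. ennreal (f y * g y) * indicator {x<..} y \<partial>\<nu> w)"
    proof (intro nn_integral_mono)
      fix y
      show "ennreal c * (ennreal (f y) * indicator {x<..} y) \<le> ennreal (f y * g y) * indicator {x<..} y"
      proof (cases "x < y")
        case True
        then have "c * f y \<le> f y * g y" using gmono[of x y] by (simp add: c_def f_def mult.commute)
        then show ?thesis using True c
          by (simp add: ennreal_mult'[symmetric] f_def)
      qed simp
    qed
    also have "\<dots> = emeasure P' {x<..}"
      unfolding P'd by (rule emeasure_density[OF _ A(2), symmetric]) (use am in \<open>simp add: f_def g_def measurable_cong_sets[OF sets refl]\<close>)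
    finally show ?thesis .
  qed
  define p where "p = measure P {..x}"
  define q where "q = measure P' {..x}"
  have compl: "measure P {x<..} = 1 - p" "measure P' {x<..} = 1 - q"
  proof -
    have "UNIV - {..x} = {x<..}" by auto
    then show "measure P {x<..} = 1 - p" "measure P' {x<..} = 1 - q"
      using P.prob_compl[of "{..x}"] P'.prob_compl[of "{..x}"] spP sets
      by (auto simp: p_def q_def Pd P'd)
  qed
  have i1: "q \<le> c * p"
    using e1 c by (simp add: P.emeasure_eq_measure P'.emeasure_eq_measure p_def q_def ennreal_mult'[symmetric])
  have i2: "c * (1 - p) \<le> 1 - q"
    using e2 c compl P.prob_le_1 by (simp add: P.emeasure_eq_measure P'.emeasure_eq_measure p_def q_def ennreal_mult'[symmetric])
  have p1: "0 \<le> p" "p \<le> 1" by (auto simp: p_def)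
  have "q \<le> p"
  proof (cases "c \<le> 1")
    case True
    then have "c * p \<le> 1 * p" using p1 by (intro mult_right_mono) auto
    then show ?thesis using i1 by simp
  next
    case False
    then have "1 * (1 - p) \<le> c * (1 - p)" using p1 by (intro mult_right_mono) auto
    then show ?thesis using i2 by simp
  qed
  then show "measure (EDF \<nu> a \<kappa> \<theta>' v \<phi>) {..x} \<le> measure (EDF \<nu> a \<kappa> \<theta> v \<phi>) {..x}"
    by (simp add: p_def q_def P_def P'_def)
qed

lemma st_le_scale:
  assumes A: "prob_space A" "sets A = sets borel" and B: "prob_space B" "sets B = sets borel"
    and c: "c > 0" and st: "st_le A B"
  shows "st_le (distr A borel (\<lambda>y. c * y)) (distr B borel (\<lambda>y. c * y))"
  unfolding st_le_def
proof
  fix x :: real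
  have pre: "(\<lambda>y. c * y) -` {..x} = {..x / c}" using c by (auto simp: field_simps)
  have spA: "space A = UNIV" using sets_eq_imp_space_eq[OF A(2)] by simp
  have spB: "space B = UNIV" using sets_eq_imp_space_eq[OF B(2)] by simp
  have "measure (distr A borel (\<lambda>y. c * y)) {..x} = measure A {..x/c}"
    by (subst measure_distr) (auto simp: measurable_cong_sets[OF A(2) refl] pre spA)
  moreover have "measure (distr B borel (\<lambda>y. c * y)) {..x} = measure B {..x/c}"
    by (subst measure_distr) (auto simp: measurable_cong_sets[OF B(2) refl] pre spB)
  ultimately show "measure (distr B borel (\<lambda>y. c * y)) {..x} \<le> measure (distr A borel (\<lambda>y. c * y)) {..x}"
    using st by (simp add: st_le_def)
qed

lemma conv_prob:
  assumes "prob_space A" "sets A = sets borel" "prob_space B" "sets B = sets borel"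
  shows "prob_space (A \<star> B)"
  unfolding convolution_def
proof (rule prob_space.prob_space_distr)
  show "prob_space (A \<Otimes>\<^sub>M B)" using assms by (intro prob_space_pair)
  show "(\<lambda>(x, y). x + y) \<in> A \<Otimes>\<^sub>M B \<rightarrow>\<^sub>M borel"
    by (simp add: measurable_cong_sets[OF sets_pair_measure_cong[OF assms(2) assms(4)] refl])
qed

lemma conv_mono_right:
  assumes A: "prob_space A" "sets A = sets borel" and B: "prob_space B" "sets B = sets borel"
    and B': "prob_space B'" "sets B' = sets borel" and st: "st_le B B'"
  shows "st_le (A \<star> B) (A \<star> B')"
  unfolding st_le_def
proof
  fix y :: real
  interpret AB: prob_space "A \<star> B" by (rule conv_prob[OF A B])
  interpret AB': prob_space "A \<star> B'" by (rule conv_prob[OF A B'])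
  interpret B: prob_space B by (rule B)
  interpret B': prob_space B' by (rule B')
  have spA: "space A = UNIV" using sets_eq_imp_space_eq[OF A(2)] by simp
  have spB: "space B = UNIV" using sets_eq_imp_space_eq[OF B(2)] by simp
  have spB': "space B' = UNIV" using sets_eq_imp_space_eq[OF B'(2)] by simp
  have set: "{a. a + x \<in> {..y}} = {..y - x}" for x :: real by auto
  have "emeasure (A \<star> B') {..y} = (\<integral>\<^sup>+x. emeasure B' {a. a + x \<in> {..y}} \<partial>A)"
    by (rule convolution_emeasure) (use A B' spA spB' in \<open>auto simp: prob_space_def\<close>)
  also have "\<dots> \<le> (\<integral>\<^sup>+x. emeasure B {a. a + x \<in> {..y}} \<partial>A)"
  proof (intro nn_integral_mono)
    fix x
    show "emeasure B' {a. a + x \<in> {..y}} \<le> emeasure B {a. a + x \<in> {..y}}"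
      using st unfolding set st_le_def by (simp add: B.emeasure_eq_measure B'.emeasure_eq_measure)
  qed
  also have "\<dots> = emeasure (A \<star> B) {..y}"
    by (rule convolution_emeasure[symmetric]) (use A B spA spB in \<open>auto simp: prob_space_def\<close>)
  finally show "measure (A \<star> B') {..y} \<le> measure (A \<star> B) {..y}"
    by (simp add: AB.emeasure_eq_measure AB'.emeasure_eq_measure)
qed

lemma conv_mono_left:
  assumes A: "prob_space A" "sets A = sets borel" and A': "prob_space A'" "sets A' = sets borel"
    and B: "prob_space B" "sets B = sets borel" and st: "st_le A A'"
  shows "st_le (A \<star> B) (A' \<star> B)"
proof -
  have "(A \<star> B) = (B \<star> A)"
    by (rule convolution_commutative) (use A B in \<open>auto simp: prob_space_def\<close>)
  moreover have "(A' \<star> B) = (B \<star> A')"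
    by (rule convolution_commutative) (use A' B in \<open>auto simp: prob_space_def\<close>)
  ultimately show ?thesis using conv_mono_right[OF B A A' st] by simp
qed

lemma st_le_trans: "st_le A B \<Longrightarrow> st_le B C \<Longrightarrow> st_le A C"
  unfolding st_le_def by (meson order_trans)

definition SQ :: "('i \<Rightarrow> real measure) \<Rightarrow> 'i set \<Rightarrow> real measure" where
  "SQ Q I = distr (PiM I Q) borel (\<lambda>\<omega>. \<Sum>i\<in>I. \<omega> i)"

lemma SQ_sets[simp]: "sets (SQ Q I) = sets borel"
  by (simp add: SQ_def)

lemma PiM_sets_borel:
  fixes Q :: "'i \<Rightarrow> real measure"
  assumes Qs: "\<And>i. sets (Q i) = sets borel"
  shows "sets (PiM I Q) = sets (PiM I (\<lambda>_. borel :: real measure))"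
  by (rule sets_PiM_cong) (auto simp: Qs)

lemma SQ_meas:
  fixes Q :: "'i \<Rightarrow> real measure"
  assumes Qs: "\<And>i. sets (Q i) = sets borel"
  shows "(\<lambda>\<omega>. \<Sum>i\<in>I. \<omega> i) \<in> borel_measurable (PiM I Q)"
  unfolding measurable_cong_sets[OF PiM_sets_borel[OF Qs] refl]
  by (intro borel_measurable_sum) (rule measurable_component_singleton)

lemma SQ_prob:
  fixes Q :: "'i \<Rightarrow> real measure"
  assumes Qp: "\<And>i. prob_space (Q i)" and Qs: "\<And>i. sets (Q i) = sets borel"
  shows "prob_space (SQ Q I)"
  unfolding SQ_def
  by (rule prob_space.prob_space_distr[OF prob_space_PiM[OF Qp] SQ_meas[OF Qs]])

lemma SQ_insert:
  fixes Q :: "'i \<Rightarrow> real measure"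
  assumes Qp: "\<And>i. prob_space (Q i)" and Qs: "\<And>i. sets (Q i) = sets borel"
    and J: "finite J" "i \<notin> J"
  shows "SQ Q (insert i J) = (Q i \<star> SQ Q J)"
proof -
  define K where "K = insert i J"
  define P where "P = PiM K Q"
  have iK: "i \<in> K" and JK: "J \<subseteq> K" and Kne: "K \<noteq> {}" by (auto simp: K_def)
  interpret P: prob_space P unfolding P_def by (rule prob_space_PiM[OF Qp])
  have ppsQ: "product_prob_space Q"
    unfolding product_prob_space_def product_prob_space_axioms_def product_sigma_finite_def
    using Qp prob_space_imp_sigma_finite by blast
  define X where "X l \<omega> = (\<omega> l :: real)" for l :: 'i and \<omega> :: "'i \<Rightarrow> real"
  have spP: "\<omega> \<in> PiE K (\<lambda>i. space (Q i))" if "\<omega> \<in> space P" for \<omega>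
    using that by (simp add: P_def space_PiM)
  have measX: "X l \<in> P \<rightarrow>\<^sub>M Q l" if "l \<in> K" for l
    unfolding X_def P_def using that by (rule measurable_component_singleton)
  have rv0: "P.random_variable borel (X l)" if "l \<in> K" for l
    using measX[OF that] unfolding measurable_cong_sets[OF refl Qs] .
  have rv: "P.random_variable borel (X l)" for l
  proof (cases "l \<in> K")
    case True then show ?thesis by (rule rv0)
  next
    case False
    have "X l \<in> P \<rightarrow>\<^sub>M borel \<longleftrightarrow> (\<lambda>_. undefined :: real) \<in> P \<rightarrow>\<^sub>M borel"
    proof (rule measurable_cong)
      fix w assume "w \<in> space P"
      then have "w \<in> PiE K (\<lambda>i. space (Q i))" by (rule spP)
      then show "X l w = undefined" using False unfolding X_def by (rule PiE_arb)
    qed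
    then show ?thesis by simp
  qed
  have dX: "distr P borel (X l) = Q l" if "l \<in> K" for l
  proof -
    have "distr P borel (X l) = distr P (Q l) (X l)"
      by (rule distr_cong) (simp_all add: Qs)
    also have "\<dots> = Q l"
      unfolding P_def X_def by (rule distr_PiM_component[OF Qp that])
    finally show ?thesis .
  qed
  have indep: "P.indep_vars (\<lambda>_. borel) X K"
  proof (rule P.indep_vars_iff_distr_eq_PiM[THEN iffD2, OF Kne rv])
    have "distr P (PiM K (\<lambda>_. borel)) (\<lambda>x. \<lambda>l\<in>K. X l x) = distr P (PiM K (\<lambda>_. borel)) (\<lambda>x. x)"
    proof (rule distr_cong)
      fix x assume "x \<in> space P"
      then have "x \<in> PiE K (\<lambda>i. space (Q i))" by (rule spP)
      then have "restrict x K = x" by (rule PiE_restrict)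
      then show "(\<lambda>l\<in>K. X l x) = x" unfolding X_def by simp
    qed simp_all
    also have "\<dots> = P"
      by (rule distr_id2) (simp add: P_def PiM_sets_borel[OF Qs])
    also have "PiM K Q = PiM K (\<lambda>l. distr P borel (X l))"
      by (rule PiM_cong) (simp_all add: dX)
    then have "P = PiM K (\<lambda>l. distr P borel (X l))" by (simp add: P_def)
    finally show "distr P (PiM K (\<lambda>_. borel)) (\<lambda>x. \<lambda>l\<in>K. X l x) = PiM K (\<lambda>l. distr P borel (X l))" .
  qed
  have ind2: "P.indep_var borel (X i) borel (\<lambda>\<omega>. \<Sum>l\<in>J. X l \<omega>)"
    using P.indep_vars_sum[OF J, of X] indep unfolding K_def .
  have rvS: "P.random_variable borel (\<lambda>\<omega>. \<Sum>l\<in>J. X l \<omega>)"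
    by (intro borel_measurable_sum rv)
  have "distr P borel (\<lambda>\<omega>. X i \<omega> + (\<Sum>l\<in>J. X l \<omega>)) = (distr P borel (X i) \<star> distr P borel (\<lambda>\<omega>. \<Sum>l\<in>J. X l \<omega>))"
    by (rule P.sum_indep_random_variable[OF ind2 rv rvS])
  moreover have "(\<lambda>\<omega>. X i \<omega> + (\<Sum>l\<in>J. X l \<omega>)) = (\<lambda>\<omega>. \<Sum>l\<in>K. \<omega> l)"
    unfolding X_def K_def using J by (simp add: sum.insert)
  moreover have "distr P borel (X i) = Q i" by (rule dX[OF iK])
  moreover have "distr P borel (\<lambda>\<omega>. \<Sum>l\<in>J. X l \<omega>) = SQ Q J"
  proof -
    have "distr P borel (\<lambda>\<omega>. \<Sum>l\<in>J. X l \<omega>) = distr P borel ((\<lambda>\<omega>. \<Sum>l\<in>J. \<omega> l) \<circ> (\<lambda>\<omega>. restrict \<omega> J))"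
      by (rule distr_cong) (simp_all add: X_def)
    also have "\<dots> = distr (distr P (PiM J Q) (\<lambda>\<omega>. restrict \<omega> J)) borel (\<lambda>\<omega>. \<Sum>l\<in>J. \<omega> l)"
    proof (rule distr_distr[symmetric])
      show "(\<lambda>\<omega>. \<Sum>l\<in>J. \<omega> l) \<in> borel_measurable (PiM J Q)" by (rule SQ_meas[OF Qs])
      show "(\<lambda>\<omega>. restrict \<omega> J) \<in> P \<rightarrow>\<^sub>M PiM J Q"
        unfolding P_def by (rule measurable_restrict_subset[OF JK])
    qed
    also have "distr P (PiM J Q) (\<lambda>\<omega>. restrict \<omega> J) = PiM J Q"
      unfolding P_def by (rule product_prob_space.distr_PiM_restrict_finite[OF ppsQ J(1) JK])
    finally show ?thesis by (simp add: SQ_def)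
  qed
  ultimately show ?thesis by (simp add: SQ_def P_def K_def)
qed

lemma SQ_laplace:
  fixes Q :: "'i \<Rightarrow> real measure"
  assumes Qp: "\<And>i. prob_space (Q i)" and Qs: "\<And>i. sets (Q i) = sets borel" and I: "finite I"
  shows "(\<integral>\<^sup>+x. ennreal (exp (s * x)) \<partial>SQ Q I) = (\<Prod>l\<in>I. \<integral>\<^sup>+x. ennreal (exp (s * x)) \<partial>Q l)"
proof -
  interpret PS: product_sigma_finite Q
    by (auto simp: product_sigma_finite_def Qp prob_space_imp_sigma_finite)
  have "(\<integral>\<^sup>+x. ennreal (exp (s * x)) \<partial>SQ Q I) = (\<integral>\<^sup>+\<omega>. ennreal (exp (s * (\<Sum>l\<in>I. \<omega> l))) \<partial>PiM I Q)"
    unfolding SQ_def by (rule nn_integral_distr[OF SQ_meas[OF Qs]]) simp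
  also have "\<dots> = (\<integral>\<^sup>+\<omega>. (\<Prod>l\<in>I. ennreal (exp (s * \<omega> l))) \<partial>PiM I Q)"
  proof (intro nn_integral_cong)
    fix \<omega> :: "'i \<Rightarrow> real"
    have "exp (s * (\<Sum>l\<in>I. \<omega> l)) = (\<Prod>l\<in>I. exp (s * \<omega> l))"
      using I by (simp add: sum_distrib_left exp_sum)
    then show "ennreal (exp (s * (\<Sum>l\<in>I. \<omega> l))) = (\<Prod>l\<in>I. ennreal (exp (s * \<omega> l)))"
      by (simp add: prod_ennreal)
  qed
  also have "\<dots> = (\<Prod>l\<in>I. \<integral>\<^sup>+x. ennreal (exp (s * x)) \<partial>Q l)"
    by (rule PS.product_nn_integral_prod[OF I]) (simp add: measurable_cong_sets[OF Qs refl])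
  finally show ?thesis .
qed

lemma SQ_mono:
  fixes Q R :: "'i \<Rightarrow> real measure"
  assumes Qp: "\<And>i. prob_space (Q i)" and Qs: "\<And>i. sets (Q i) = sets borel"
    and Rp: "\<And>i. prob_space (R i)" and Rs: "\<And>i. sets (R i) = sets borel"
    and I: "finite I" and st: "\<And>i. i \<in> I \<Longrightarrow> st_le (Q i) (R i)"
  shows "st_le (SQ Q I) (SQ R I)"
  using I st
proof (induction I rule: finite_induct)
  case empty
  have "SQ Q {} = SQ R {}" unfolding SQ_def PiM_empty ..
  then show ?case by (simp add: st_le_def)
next
  case (insert i J)
  have sti: "st_le (Q i) (R i)" using insert.prems by simp
  have stJ: "st_le (SQ Q J) (SQ R J)" using insert.IH insert.prems by simp
  have pQ: "prob_space (SQ Q J)" by (rule SQ_prob[OF Qp Qs])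
  have pR: "prob_space (SQ R J)" by (rule SQ_prob[OF Rp Rs])
  have sQ: "sets (SQ Q J) = sets borel" and sR: "sets (SQ R J) = sets borel" by simp_all
  have 1: "st_le (Q i \<star> SQ Q J) (R i \<star> SQ Q J)"
    by (rule conv_mono_left[OF Qp Qs Rp Rs pQ sQ sti])
  have 2: "st_le (R i \<star> SQ Q J) (R i \<star> SQ R J)"
    by (rule conv_mono_right[OF Rp Rs pQ sQ pR sR stJ])
  have "st_le (Q i \<star> SQ Q J) (R i \<star> SQ R J)"
    using 1 2 by (rule st_le_trans)
  then show ?case
    by (simp only: SQ_insert[OF Qp Qs insert.hyps] SQ_insert[OF Rp Rs insert.hyps])
qed

lemma Qif_prob:
  assumes "\<And>i. i \<in> I \<Longrightarrow> prob_space (D i)" "\<And>i. i \<in> I \<Longrightarrow> sets (D i) = sets borel"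
  shows "prob_space (if i \<in> I then distr (D i) borel (\<lambda>y. c i * (y::real)) else return borel 0)"
    "sets (if i \<in> I then distr (D i) borel (\<lambda>y. c i * (y::real)) else return borel (0::real)) = sets borel"
proof -
  show "prob_space (if i \<in> I then distr (D i) borel (\<lambda>y. c i * (y::real)) else return borel 0)"
  proof (cases "i \<in> I")
    case True
    then show ?thesis
      using assms by (simp add: prob_space.prob_space_distr measurable_cong_sets[OF assms(2)[OF True] refl])
  next
    case False
    then show ?thesis by (simp add: prob_space_return)
  qed
  show "sets (if i \<in> I then distr (D i) borel (\<lambda>y. c i * (y::real)) else return borel (0::real)) = sets borel"
    by simp
qed

lemma SQ_EDF:
  fixes v :: "'i \<Rightarrow> real"
  assumes cf: "cumulant_fun \<nu> a \<kappa> \<Theta>" and p: "\<phi> > 0" and I: "finite I" "I \<noteq> {}"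
    and v: "\<And>i. i \<in> I \<Longrightarrow> v i > 0" and th: "\<theta>0 \<in> interior \<Theta>"
    and V: "V = (\<Sum>i\<in>I. v i)"
    and Q: "Q = (\<lambda>i. if i \<in> I then distr (EDF \<nu> a \<kappa> \<theta>0 (v i) \<phi>) borel (\<lambda>y. v i / V * y) else return borel 0)"
  shows "SQ Q I = EDF \<nu> a \<kappa> \<theta>0 V \<phi>"
proof -
  have Vp: "V > 0" unfolding V using I v by (intro sum_pos) auto
  define W where "W = V / \<phi>"
  have Wp: "W > 0" using Vp p by (simp add: W_def)
  obtain \<epsilon> where e: "\<epsilon> > 0" "ball \<theta>0 \<epsilon> \<subseteq> \<Theta>" using th by (auto simp: mem_interior)
  have th0: "\<theta>0 \<in> \<Theta>" using e by auto
  define \<delta> where "\<delta> = \<epsilon> * W"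
  have d0: "\<delta> > 0" using e Wp by (simp add: \<delta>_def)
  have inb: "\<theta>0 + s / W \<in> \<Theta>" if "\<bar>s\<bar> < \<delta>" for s
  proof -
    have "\<bar>s / W\<bar> < \<epsilon>" using that Wp by (simp add: \<delta>_def abs_divide field_simps)
    then have "\<theta>0 + s / W \<in> ball \<theta>0 \<epsilon>" by (simp add: dist_real_def)
    then show ?thesis using e by auto
  qed
  have Dp: "\<And>i. i \<in> I \<Longrightarrow> prob_space (EDF \<nu> a \<kappa> \<theta>0 (v i) \<phi>)"
    using EDF_prob[OF cf p v th0] by blast
  have Ds: "\<And>i. i \<in> I \<Longrightarrow> sets (EDF \<nu> a \<kappa> \<theta>0 (v i) \<phi>) = sets borel"
    using EDF_sets[OF cf p v] by blast
  have Qp: "prob_space (Q i)" and Qs: "sets (Q i) = sets borel" for i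
    unfolding Q using Qif_prob[where I=I and D="\<lambda>i. EDF \<nu> a \<kappa> \<theta>0 (v i) \<phi>" and c="\<lambda>i. v i / V" and i=i, OF Dp Ds] by simp_all
  have lapQ: "(\<integral>\<^sup>+x. ennreal (exp (s * x)) \<partial>Q i) = ennreal (exp ((v i / \<phi>) * (\<kappa> (\<theta>0 + s / W) - \<kappa> \<theta>0)))"
    if "i \<in> I" "\<bar>s\<bar> < \<delta>" for i s
  proof -
    have "(\<integral>\<^sup>+x. ennreal (exp (s * x)) \<partial>Q i) = (\<integral>\<^sup>+y. ennreal (exp ((s * (v i / V)) * y)) \<partial>EDF \<nu> a \<kappa> \<theta>0 (v i) \<phi>)"
      unfolding Q using that(1)
      by (simp add: nn_integral_distr measurable_cong_sets[OF Ds[OF that(1)] refl] mult.assoc)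
    also have "s * (v i / V) / (v i / \<phi>) = s / W"
      using v[OF that(1)] p Vp by (simp add: W_def field_simps)
    then have "(\<integral>\<^sup>+y. ennreal (exp ((s * (v i / V)) * y)) \<partial>EDF \<nu> a \<kappa> \<theta>0 (v i) \<phi>)
        = ennreal (exp ((v i / \<phi>) * (\<kappa> (\<theta>0 + s / W) - \<kappa> \<theta>0)))"
      using EDF_laplace[OF cf p v[OF that(1)] th0, of "s * (v i / V)"] inb[OF that(2)] by simp
    finally show ?thesis .
  qed
  have lapS: "(\<integral>\<^sup>+x. ennreal (exp (s * x)) \<partial>SQ Q I) = ennreal (exp (W * (\<kappa> (\<theta>0 + s / W) - \<kappa> \<theta>0)))"
    if "\<bar>s\<bar> < \<delta>" for s
  proof -
    have "(\<integral>\<^sup>+x. ennreal (exp (s * x)) \<partial>SQ Q I) = (\<Prod>i\<in>I. \<integral>\<^sup>+x. ennreal (exp (s * x)) \<partial>Q i)"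
      by (rule SQ_laplace[OF Qp Qs I(1)])
    also have "\<dots> = (\<Prod>i\<in>I. ennreal (exp ((v i / \<phi>) * (\<kappa> (\<theta>0 + s / W) - \<kappa> \<theta>0))))"
      using lapQ that by (intro prod.cong) auto
    also have "\<dots> = ennreal (\<Prod>i\<in>I. exp ((v i / \<phi>) * (\<kappa> (\<theta>0 + s / W) - \<kappa> \<theta>0)))"
      by (rule prod_ennreal) simp
    also have "(\<Prod>i\<in>I. exp ((v i / \<phi>) * (\<kappa> (\<theta>0 + s / W) - \<kappa> \<theta>0))) = exp (\<Sum>i\<in>I. (v i / \<phi>) * (\<kappa> (\<theta>0 + s / W) - \<kappa> \<theta>0))"
      using I(1) by (simp add: exp_sum)
    also have "(\<Sum>i\<in>I. (v i / \<phi>) * (\<kappa> (\<theta>0 + s / W) - \<kappa> \<theta>0)) = W * (\<kappa> (\<theta>0 + s / W) - \<kappa> \<theta>0)"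
      by (simp add: W_def V sum_distrib_right sum_divide_distrib[symmetric])
    finally show ?thesis .
  qed
  have lapE: "(\<integral>\<^sup>+x. ennreal (exp (s * x)) \<partial>EDF \<nu> a \<kappa> \<theta>0 V \<phi>) = ennreal (exp (W * (\<kappa> (\<theta>0 + s / W) - \<kappa> \<theta>0)))"
    if "\<bar>s\<bar> < \<delta>" for s
    using EDF_laplace[OF cf p Vp th0, of s] inb[OF that] by (simp add: W_def)
  have SQp: "prob_space (SQ Q I)" by (rule SQ_prob[OF Qp Qs])
  have Ep: "prob_space (EDF \<nu> a \<kappa> \<theta>0 V \<phi>)" by (rule EDF_prob[OF cf p Vp th0])
  have Es: "sets (EDF \<nu> a \<kappa> \<theta>0 V \<phi>) = sets borel" by (rule EDF_sets[OF cf p Vp])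
  have intS: "integrable (SQ Q I) (\<lambda>x. exp (s * x)) \<and> (\<integral>x. exp (s * x) \<partial>SQ Q I) = exp (W * (\<kappa> (\<theta>0 + s / W) - \<kappa> \<theta>0))"
    if "\<bar>s\<bar> < \<delta>" for s
  proof -
    have m: "(\<lambda>x. exp (s * x)) \<in> borel_measurable (SQ Q I)"
      unfolding measurable_cong_sets[OF SQ_sets refl] by simp
    show ?thesis
      using nn_integral_eq_integrable[OF m, of "exp (W * (\<kappa> (\<theta>0 + s / W) - \<kappa> \<theta>0))"] lapS[OF that] by simp
  qed
  have intE: "integrable (EDF \<nu> a \<kappa> \<theta>0 V \<phi>) (\<lambda>x. exp (s * x)) \<and> (\<integral>x. exp (s * x) \<partial>EDF \<nu> a \<kappa> \<theta>0 V \<phi>) = exp (W * (\<kappa> (\<theta>0 + s / W) - \<kappa> \<theta>0))"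
    if "\<bar>s\<bar> < \<delta>" for s
  proof -
    have m: "(\<lambda>x. exp (s * x)) \<in> borel_measurable (EDF \<nu> a \<kappa> \<theta>0 V \<phi>)"
      unfolding measurable_cong_sets[OF Es refl] by simp
    show ?thesis
      using nn_integral_eq_integrable[OF m, of "exp (W * (\<kappa> (\<theta>0 + s / W) - \<kappa> \<theta>0))"] lapE[OF that] by simp
  qed
  have r1: "real_distribution (SQ Q I)" using SQp by (simp add: real_distribution_def real_distribution_axioms_def)
  have r2: "real_distribution (EDF \<nu> a \<kappa> \<theta>0 V \<phi>)" using Ep Es by (simp add: real_distribution_def real_distribution_axioms_def)
  have L1: "integrable (SQ Q I) (\<lambda>x. exp (s * x))" if "\<bar>s\<bar> < \<delta>" for s using intS[OF that] by blast
  have L2: "integrable (EDF \<nu> a \<kappa> \<theta>0 V \<phi>) (\<lambda>x. exp (s * x))" if "\<bar>s\<bar> < \<delta>" for s using intE[OF that] by blast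
  have EE: "(\<integral>x. exp (s * x) \<partial>SQ Q I) = (\<integral>x. exp (s * x) \<partial>EDF \<nu> a \<kappa> \<theta>0 V \<phi>)" if "\<bar>s\<bar> < \<delta>" for s
    using intS[OF that] intE[OF that] by simp
  show ?thesis by (rule laplace_unique[OF r1 r2 d0 L1 L2 EE])
qed

lemma law_sum:
  fixes M :: "'s measure" and Y :: "'i \<Rightarrow> 's \<Rightarrow> real" and c :: "'i \<Rightarrow> real"
  assumes Mp: "prob_space M" and ind: "prob_space.indep_vars M (\<lambda>_. borel) Y I" and I: "finite I" "I \<noteq> {}"
    and Q: "Q = (\<lambda>i. if i \<in> I then distr (distr M borel (Y i)) borel (\<lambda>y. c i * y) else return borel 0)"
  shows "distr M borel (\<lambda>\<omega>. \<Sum>i\<in>I. c i * Y i \<omega>) = SQ Q I"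
proof -
  interpret M: prob_space M by (rule Mp)
  have rvY: "M.random_variable borel (Y i)" if "i \<in> I" for i
    using ind that unfolding M.indep_vars_def2 by blast
  define X where "X i \<omega> = (if i \<in> I then c i * Y i \<omega> else 0)" for i \<omega>
  have rvX: "M.random_variable borel (X i)" for i
  proof (cases "i \<in> I")
    case True
    then show ?thesis unfolding X_def using rvY[OF True] by simp
  next
    case False
    then show ?thesis unfolding X_def by simp
  qed
  have ind1: "M.indep_vars (\<lambda>_. borel) (\<lambda>i \<omega>. c i * Y i \<omega>) I"
    using M.indep_vars_compose2[OF ind, of "\<lambda>i y. c i * y" "\<lambda>_. borel"] by simp
  have indX: "M.indep_vars (\<lambda>_. borel) X I"
    using ind1 by (subst M.indep_vars_cong[of I I X "\<lambda>i \<omega>. c i * Y i \<omega>"]) (auto simp: X_def fun_eq_iff)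
  have dist: "distr M (PiM I (\<lambda>_. borel)) (\<lambda>x. \<lambda>i\<in>I. X i x) = PiM I (\<lambda>i. distr M borel (X i))"
    using M.indep_vars_iff_distr_eq_PiM[OF I(2) rvX] indX by simp
  have dXi: "distr M borel (X i) = Q i" if "i \<in> I" for i
  proof -
    have "distr M borel (X i) = distr M borel ((\<lambda>y. c i * y) \<circ> Y i)"
      by (rule distr_cong) (simp_all add: X_def that)
    also have "\<dots> = distr (distr M borel (Y i)) borel (\<lambda>y. c i * y)"
      by (rule distr_distr[symmetric]) (simp_all add: rvY[OF that])
    finally show ?thesis using that by (simp add: Q)
  qed
  have "distr M borel (\<lambda>\<omega>. \<Sum>i\<in>I. c i * Y i \<omega>) = distr M borel ((\<lambda>\<omega>. \<Sum>i\<in>I. \<omega> i) \<circ> (\<lambda>x. \<lambda>i\<in>I. X i x))"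
    by (rule distr_cong) (simp_all add: X_def)
  also have "\<dots> = distr (distr M (PiM I (\<lambda>_. borel)) (\<lambda>x. \<lambda>i\<in>I. X i x)) borel (\<lambda>\<omega>. \<Sum>i\<in>I. \<omega> i)"
  proof (rule distr_distr[symmetric])
    show "(\<lambda>\<omega>. \<Sum>i\<in>I. \<omega> i) \<in> borel_measurable (PiM I (\<lambda>_. borel :: real measure))"
      by (rule SQ_meas) simp
    show "(\<lambda>x. \<lambda>i\<in>I. X i x) \<in> M \<rightarrow>\<^sub>M PiM I (\<lambda>_. borel)"
      by (rule measurable_restrict) (rule rvX)
  qed
  also have "\<dots> = distr (PiM I (\<lambda>i. distr M borel (X i))) borel (\<lambda>\<omega>. \<Sum>i\<in>I. \<omega> i)"
    unfolding dist ..
  also have "PiM I (\<lambda>i. distr M borel (X i)) = PiM I Q"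
    by (rule PiM_cong) (simp_all add: dXi)
  finally show ?thesis by (simp add: SQ_def)
qed

theorem lemma3p6:
  fixes M :: "'s measure" and Y :: "int \<Rightarrow> 's \<Rightarrow> real"
    and \<nu> :: "real \<Rightarrow> real measure" and a :: "real \<Rightarrow> real \<Rightarrow> real"
    and \<kappa> :: "real \<Rightarrow> real" and \<Theta> :: "real set"
    and \<theta> v :: "int \<Rightarrow> real" and \<phi> :: real and j k :: int
  assumes "cumulant_fun \<nu> a \<kappa> \<Theta>" and "A1 \<nu> \<Theta>"
    and "\<phi> > 0" and "j \<le> k"
    and "prob_space M"
    and "prob_space.indep_vars M (\<lambda>_. borel) Y {j..k}"
    and "\<And>i. i \<in> {j..k} \<Longrightarrow> v i > 0"
    and "\<And>i. i \<in> {j..k} \<Longrightarrow> \<theta> i \<in> interior \<Theta>"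
    and "\<And>i. i \<in> {j..k} \<Longrightarrow> distr M borel (Y i) = EDF \<nu> a \<kappa> (\<theta> i) (v i) \<phi>"
    and "\<And>i i'. i \<in> {j..k} \<Longrightarrow> i' \<in> {j..k} \<Longrightarrow> i \<le> i' \<Longrightarrow> \<theta> i \<le> \<theta> i'"
  shows "st_le (EDF \<nu> a \<kappa> (\<theta> j) (\<Sum>i\<in>{j..k}. v i) \<phi>)
              (distr M borel (\<lambda>\<omega>. (\<Sum>i\<in>{j..k}. v i * Y i \<omega>) / (\<Sum>i\<in>{j..k}. v i)))
       \<and> st_le (distr M borel (\<lambda>\<omega>. (\<Sum>i\<in>{j..k}. v i * Y i \<omega>) / (\<Sum>i\<in>{j..k}. v i)))
              (EDF \<nu> a \<kappa> (\<theta> k) (\<Sum>i\<in>{j..k}. v i) \<phi>)"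
proof -
  note cf = assms(1) and p = assms(3) and jk = assms(4) and Mp = assms(5) and ind = assms(6)
    and v = assms(7) and thi = assms(8) and dY = assms(9) and mono = assms(10)
  define I where "I = {j..k}"
  have I: "finite I" "I \<noteq> {}" using jk by (auto simp: I_def)
  have jI: "j \<in> I" and kI: "k \<in> I" using jk by (auto simp: I_def)
  define V where "V = (\<Sum>i\<in>I. v i)"
  have Vp: "V > 0" unfolding V_def using I v by (intro sum_pos) (auto simp: I_def)
  have thT: "\<theta> i \<in> \<Theta>" if "i \<in> I" for i using thi[of i] that interior_subset by (auto simp: I_def)
  have vI: "v i > 0" if "i \<in> I" for i using v that by (auto simp: I_def)
  define Qt where "Qt t = (\<lambda>i. if i \<in> I then distr (EDF \<nu> a \<kappa> (t i) (v i) \<phi>) borel (\<lambda>y. v i / V * y) else return borel 0)"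
    for t :: "int \<Rightarrow> real"
  have Qt_ps: "prob_space (Qt t i)" "sets (Qt t i) = sets borel" if "\<And>i. i \<in> I \<Longrightarrow> t i \<in> \<Theta>" for t i
  proof -
    have Dp: "\<And>i. i \<in> I \<Longrightarrow> prob_space (EDF \<nu> a \<kappa> (t i) (v i) \<phi>)"
      using EDF_prob[OF cf p vI that] by blast
    have Ds: "\<And>i. i \<in> I \<Longrightarrow> sets (EDF \<nu> a \<kappa> (t i) (v i) \<phi>) = sets borel"
      using EDF_sets[OF cf p vI] by blast
    show "prob_space (Qt t i)" "sets (Qt t i) = sets borel"
      unfolding Qt_def using Qif_prob[where I=I and D="\<lambda>i. EDF \<nu> a \<kappa> (t i) (v i) \<phi>" and c="\<lambda>i. v i / V" and i=i, OF Dp Ds]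
      by simp_all
  qed
  have tj: "\<And>i. i \<in> I \<Longrightarrow> (\<lambda>_. \<theta> j) i \<in> \<Theta>" using thT[OF jI] by simp
  have tk: "\<And>i. i \<in> I \<Longrightarrow> (\<lambda>_. \<theta> k) i \<in> \<Theta>" using thT[OF kI] by simp
  have law: "distr M borel (\<lambda>\<omega>. (\<Sum>i\<in>I. v i * Y i \<omega>) / V) = SQ (Qt \<theta>) I"
  proof -
    have "(\<lambda>\<omega>. (\<Sum>i\<in>I. v i * Y i \<omega>) / V) = (\<lambda>\<omega>. \<Sum>i\<in>I. (v i / V) * Y i \<omega>)"
      by (simp add: sum_divide_distrib)
    moreover have "distr M borel (\<lambda>\<omega>. \<Sum>i\<in>I. (v i / V) * Y i \<omega>)
        = SQ (\<lambda>i. if i \<in> I then distr (distr M borel (Y i)) borel (\<lambda>y. v i / V * y) else return borel 0) I"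
      by (rule law_sum[OF Mp ind[folded I_def] I refl])
    moreover have "(\<lambda>i. if i \<in> I then distr (distr M borel (Y i)) borel (\<lambda>y. v i / V * y) else return borel 0) = Qt \<theta>"
      using dY by (auto simp: Qt_def I_def fun_eq_iff)
    ultimately show ?thesis by simp
  qed
  have lo: "SQ (Qt (\<lambda>_. \<theta> j)) I = EDF \<nu> a \<kappa> (\<theta> j) V \<phi>"
    by (rule SQ_EDF[OF cf p I vI thi V_def]) (auto simp: Qt_def I_def jk)
  have hi: "SQ (Qt (\<lambda>_. \<theta> k)) I = EDF \<nu> a \<kappa> (\<theta> k) V \<phi>"
    by (rule SQ_EDF[OF cf p I vI thi V_def]) (auto simp: Qt_def I_def jk)
  have st_i: "st_le (Qt t i) (Qt t' i)" if "i \<in> I" "t i \<in> \<Theta>" "t' i \<in> \<Theta>" "t i \<le> t' i" for t t' i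
  proof -
    have st: "st_le (distr (EDF \<nu> a \<kappa> (t i) (v i) \<phi>) borel (\<lambda>y. v i / V * y)) (distr (EDF \<nu> a \<kappa> (t' i) (v i) \<phi>) borel (\<lambda>y. v i / V * y))"
      by (rule st_le_scale[OF EDF_prob[OF cf p vI[OF that(1)] that(2)] EDF_sets[OF cf p vI[OF that(1)]]
            EDF_prob[OF cf p vI[OF that(1)] that(3)] EDF_sets[OF cf p vI[OF that(1)]] _
            EDF_st_mono[OF cf p vI[OF that(1)] that(2,3,4)]])
        (use Vp vI[OF that(1)] in simp)
    have e1: "Qt t i = distr (EDF \<nu> a \<kappa> (t i) (v i) \<phi>) borel (\<lambda>y. v i / V * y)"
      unfolding Qt_def by (simp only: that(1) if_True)
    have e2: "Qt t' i = distr (EDF \<nu> a \<kappa> (t' i) (v i) \<phi>) borel (\<lambda>y. v i / V * y)"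
      unfolding Qt_def by (simp only: that(1) if_True)
    show ?thesis unfolding e1 e2 by (rule st)
  qed
  have 1: "st_le (SQ (Qt (\<lambda>_. \<theta> j)) I) (SQ (Qt \<theta>) I)"
  proof (rule SQ_mono[OF Qt_ps(1)[OF tj] Qt_ps(2)[OF tj] Qt_ps(1)[OF thT] Qt_ps(2)[OF thT] I(1)])
    fix i assume "i \<in> I"
    then show "st_le (Qt (\<lambda>_. \<theta> j) i) (Qt \<theta> i)"
      using thT jI by (intro st_i) (auto intro: mono simp: I_def)
  qed
  have 2: "st_le (SQ (Qt \<theta>) I) (SQ (Qt (\<lambda>_. \<theta> k)) I)"
  proof (rule SQ_mono[OF Qt_ps(1)[OF thT] Qt_ps(2)[OF thT] Qt_ps(1)[OF tk] Qt_ps(2)[OF tk] I(1)])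
    fix i assume "i \<in> I"
    then show "st_le (Qt \<theta> i) (Qt (\<lambda>_. \<theta> k) i)"
      using thT kI by (intro st_i) (auto intro: mono simp: I_def)
  qed
  show ?thesis
    using 1 2 law lo hi unfolding I_def V_def by simp
qed

end
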